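(* Let $G$ be a connected finite simple graph with $n\ge2$ vertices. Then $$\bigcup_{H}\mathscr{H}_H(G)=\{0,1,\dots,h^+_{K_n}(G)\},$$ where $H$ ranges over all simple graphs on a fixed $n$-element vertex set, and $h^+_{K_n}(G)=\max\mathscr{H}_{K_n}(G)$ (the sum of distances over all pairs of vertices of $G$).
   Context: For finite simple graphs $H,G$ with $|V(H)|=|V(G)|$ and $G$ connected, the $H$-Hamiltonian spectrum of $G$ is $\mathscr{H}_H(G)=\{\sum_{\{x,y\}\in E(H)}\rho_G(f(x),f(y)) : f:V(H)\to V(G)\text{ bijection}\}$, where $\rho_G$ is the graph distance in $G$; $h^+_H(G)=\max\mathscr H_H(G)$. *)

theory Defs
  imports Main
begin

definition simple_graph :: "'a set \<Rightarrow> ('a \<Rightarrow> 'a \<Rightarrow> bool) \<Rightarrow> bool" where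
  "simple_graph V E \<longleftrightarrow> finite V \<and> (\<forall>x y. E x y \<longrightarrow> x \<in> V \<and> y \<in> V)
     \<and> (\<forall>x y. E x y \<longrightarrow> E y x) \<and> (\<forall>x. \<not> E x x)"

definition walk :: "('a \<Rightarrow> 'a \<Rightarrow> bool) \<Rightarrow> 'a \<Rightarrow> 'a \<Rightarrow> nat \<Rightarrow> bool" where
  "walk E x y k \<longleftrightarrow> (\<exists>p. length p = Suc k \<and> p ! 0 = x \<and> p ! k = y
       \<and> (\<forall>i<k. E (p ! i) (p ! Suc i)))"

definition connected_graph :: "'a set \<Rightarrow> ('a \<Rightarrow> 'a \<Rightarrow> bool) \<Rightarrow> bool" where
  "connected_graph V E \<longleftrightarrow> V \<noteq> {} \<and> (\<forall>x\<in>V. \<forall>y\<in>V. \<exists>k. walk E x y k)"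

definition dist :: "('a \<Rightarrow> 'a \<Rightarrow> bool) \<Rightarrow> 'a \<Rightarrow> 'a \<Rightarrow> nat" where
  "dist E x y = (LEAST k. walk E x y k)"

definition simple_graphs_on :: "'b set \<Rightarrow> 'b set set set" where
  "simple_graphs_on W = Pow {e. e \<subseteq> W \<and> card e = 2}"

definition ham_spectrum :: "'b set \<Rightarrow> 'b set set \<Rightarrow> 'a set \<Rightarrow> ('a \<Rightarrow> 'a \<Rightarrow> bool) \<Rightarrow> nat set" where
  "ham_spectrum W EH V E =
     {s. \<exists>f. bij_betw f W V \<and> s = (\<Sum>e\<in>EH. dist E (f (SOME x. x \<in> e)) (f (SOME y. y \<in> e - {SOME x. x \<in> e})))}"

definition complete_edges :: "'b set \<Rightarrow> 'b set set" where
  "complete_edges W = {e. e \<subseteq> W \<and> card e = 2}"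

definition h_plus :: "'b set \<Rightarrow> 'b set set \<Rightarrow> 'a set \<Rightarrow> ('a \<Rightarrow> 'a \<Rightarrow> bool) \<Rightarrow> nat" where
  "h_plus W EH V E = Max (ham_spectrum W EH V E)"

end

theory Submission
  imports Defs
begin

lemma subset_sums:
  fixes w :: "'c \<Rightarrow> nat"
  assumes "finite S" "\<forall>x\<in>S. 2 \<le> w x \<longrightarrow> (\<exists>y\<in>S. w y = w x - 1)" "k \<le> sum w S"
  shows "\<exists>A\<subseteq>S. sum w A = k"
  using assms
proof (induction "card S" arbitrary: S k)
  case 0
  then show ?case by (intro exI[of _ "{}"]) auto
next
  case (Suc m)
  then have ne: "S \<noteq> {}" by auto
  have "Max (w ` S) \<in> w ` S" using Suc.prems(1) ne by (intro Max_in) auto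
  then obtain x where x: "x \<in> S" "w x = Max (w ` S)" by (auto simp del: Max_in)
  have xmax: "\<forall>z\<in>S. w z \<le> w x" using x Suc.prems by auto
  define S' where "S' = S - {x}"
  have cS': "m = card S'" using Suc.hyps x Suc.prems unfolding S'_def by auto
  have fS': "finite S'" using Suc.prems unfolding S'_def by auto
  have prop': "\<forall>z\<in>S'. 2 \<le> w z \<longrightarrow> (\<exists>y\<in>S'. w y = w z - 1)"
  proof (intro ballI impI)
    fix z assume z: "z \<in> S'" "2 \<le> w z"
    then obtain y where y: "y \<in> S" "w y = w z - 1" using Suc.prems(2) unfolding S'_def by auto
    have "w z \<le> w x" using xmax z unfolding S'_def by auto
    then have "y \<noteq> x" using y z by auto
    then show "\<exists>y\<in>S'. w y = w z - 1" using y unfolding S'_def by auto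
  qed
  have sumS: "sum w S = w x + sum w S'"
    using sum.remove[OF Suc.prems(1) x(1)] unfolding S'_def by simp
  have wx: "w x \<le> Suc (sum w S')"
  proof (cases "2 \<le> w x")
    case True
    then obtain y where y: "y \<in> S" "w y = w x - 1" using Suc.prems(2) x by auto
    then have "y \<noteq> x" using True by auto
    then have "y \<in> S'" using y unfolding S'_def by auto
    then have "w y \<le> sum w S'" using fS' by (simp add: member_le_sum)
    then show ?thesis using y True by auto
  qed auto
  show ?case
  proof (cases "k \<le> sum w S'")
    case True
    then obtain A where "A \<subseteq> S'" "sum w A = k" using Suc.hyps(1)[OF cS' fS' prop'] by blast
    then show ?thesis unfolding S'_def by auto
  next
    case False
    then have "k - w x \<le> sum w S'" using Suc.prems(3) sumS by auto
    then obtain A where A: "A \<subseteq> S'" "sum w A = k - w x" using Suc.hyps(1)[OF cS' fS' prop'] by blast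
    have fA: "finite A" using A fS' finite_subset by auto
    have "x \<notin> A" using A unfolding S'_def by auto
    then have "sum w (insert x A) = w x + (k - w x)" using fA A by simp
    also have "\<dots> = k" using False wx by auto
    finally show ?thesis using A x unfolding S'_def by (intro exI[of _ "insert x A"]) auto
  qed
qed

definition tm :: "('a \<Rightarrow> 'a \<Rightarrow> bool) \<Rightarrow> ('b \<Rightarrow> 'a) \<Rightarrow> 'b set \<Rightarrow> nat" where
  "tm E f e = dist E (f (SOME x. x \<in> e)) (f (SOME y. y \<in> e - {SOME x. x \<in> e}))"

lemma ham_spectrum_tm: "ham_spectrum W EH V E = {s. \<exists>f. bij_betw f W V \<and> s = sum (tm E f) EH}"
  unfolding ham_spectrum_def tm_def by simp

lemma tm_eq:
  assumes sym: "\<forall>x y. dist E x y = dist E y x" and ab: "a \<noteq> b"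
  shows "tm E f {a,b} = dist E (f a) (f b)"
proof -
  define p where "p = (SOME x. x \<in> {a,b})"
  have p: "p \<in> {a,b}" unfolding p_def by (rule someI[of _ a]) simp
  define q where "q = (SOME y. y \<in> {a,b} - {p})"
  have "\<exists>y. y \<in> {a,b} - {p}" using ab by auto
  then have q: "q \<in> {a,b} - {p}" unfolding q_def by (rule someI_ex)
  have "tm E f {a,b} = dist E (f p) (f q)" unfolding tm_def p_def q_def by simp
  then show ?thesis using p q sym by auto
qed

lemma walk_rev:
  assumes sym: "\<forall>x y. E x y \<longrightarrow> E y x" and "walk E x y k"
  shows "walk E y x k"
proof -
  obtain p where p: "length p = Suc k" "p ! 0 = x" "p ! k = y" "\<forall>i<k. E (p ! i) (p ! Suc i)"
    using assms(2) unfolding walk_def by auto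
  have "length (rev p) = Suc k" using p by simp
  moreover have "rev p ! 0 = y" using p by (simp add: rev_nth)
  moreover have "rev p ! k = x" using p by (simp add: rev_nth)
  moreover have "\<forall>i<k. E (rev p ! i) (rev p ! Suc i)"
  proof (intro allI impI)
    fix i assume i: "i < k"
    have "E (p ! (k - Suc i)) (p ! Suc (k - Suc i))" using p i by auto
    moreover have "Suc (k - Suc i) = k - i" using i by auto
    ultimately have "E (p ! (k - Suc i)) (p ! (k - i))" by simp
    then have "E (p ! (k - i)) (p ! (k - Suc i))" using sym by blast
    then show "E (rev p ! i) (rev p ! Suc i)" using p i by (simp add: rev_nth)
  qed
  ultimately show ?thesis unfolding walk_def by blast
qed

lemma dist_sym:
  assumes sym: "\<forall>x y. E x y \<longrightarrow> E y x"
  shows "dist E x y = dist E y x"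
proof -
  have "walk E x y = walk E y x" using walk_rev[OF sym] by (intro ext iffI) auto
  then show ?thesis unfolding dist_def by simp
qed

lemma walk_take:
  assumes "length p = Suc k" "p ! 0 = x" "\<forall>i<k. E (p ! i) (p ! Suc i)" "j \<le> k"
  shows "walk E x (p ! j) j"
  unfolding walk_def using assms
  by (intro exI[of _ "take (Suc j) p"]) auto

lemma walk_snoc:
  assumes "walk E x y k" "E y z"
  shows "walk E x z (Suc k)"
proof -
  obtain p where p: "length p = Suc k" "p ! 0 = x" "p ! k = y" "\<forall>i<k. E (p ! i) (p ! Suc i)"
    using assms(1) unfolding walk_def by auto
  have "\<forall>i<Suc k. E ((p @ [z]) ! i) ((p @ [z]) ! Suc i)"
  proof (intro allI impI)
    fix i assume "i < Suc k"
    then show "E ((p @ [z]) ! i) ((p @ [z]) ! Suc i)"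
      using p assms(2) by (cases "i = k") (auto simp: nth_append)
  qed
  then show ?thesis unfolding walk_def using p
    by (intro exI[of _ "p @ [z]"]) (auto simp: nth_append)
qed

lemma walk0: "walk E x y 0 \<Longrightarrow> x = y"
  unfolding walk_def by auto

lemma walk_refl: "walk E x x 0"
  unfolding walk_def by (intro exI[of _ "[x]"]) auto

theorem mainTheorem13:
  fixes V :: "'a set" and E :: "'a \<Rightarrow> 'a \<Rightarrow> bool" and W :: "'b set"
  assumes "simple_graph V E" and "connected_graph V E"
    and "card V = n" and "n \<ge> 2" and "finite W" and "card W = n"
  shows "(\<Union>EH\<in>simple_graphs_on W. ham_spectrum W EH V E)
           = {0 .. h_plus W (complete_edges W) V E}"
proof -
  have fV: "finite V" and Ein: "\<forall>x y. E x y \<longrightarrow> x \<in> V \<and> y \<in> V"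
    and Esym: "\<forall>x y. E x y \<longrightarrow> E y x"
    using assms(1) unfolding simple_graph_def by auto
  have conn: "\<forall>x\<in>V. \<forall>y\<in>V. \<exists>k. walk E x y k" using assms(2) unfolding connected_graph_def by auto
  have dsym: "\<forall>x y. dist E x y = dist E y x" by (intro allI) (rule dist_sym[OF Esym])
  obtain f0 where bij0: "bij_betw f0 W V"
  proof -
    have "card W = card V" using assms(3,6) by simp
    then show ?thesis using finite_same_card_bij[OF assms(5) fV] that by blast
  qed
  define K where "K = complete_edges W"
  have fK: "finite K" unfolding K_def complete_edges_def
    by (rule finite_subset[of _ "Pow W"]) (auto simp: assms(5))
  define D where "D = sum (tm E f0) K"
  have indep0: "sum (tm E f) K = sum (tm E id) {e. e \<subseteq> V \<and> card e = 2}"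
    if bf: "bij_betw f W V" for f
  proof -
    have inj: "inj_on f W" and im: "f ` W = V" using bf unfolding bij_betw_def by auto
    have eq: "tm E f e = (tm E id \<circ> (`) f) e" if e: "e \<in> K" for e
    proof -
      obtain a b where ab: "e = {a,b}" "a \<noteq> b" using e unfolding K_def complete_edges_def
        by (auto simp: card_2_iff)
      have "a \<in> W" "b \<in> W" using e ab unfolding K_def complete_edges_def by auto
      then have "f a \<noteq> f b" using inj ab inj_on_eq_iff by metis
      then show ?thesis using tm_eq[OF dsym ab(2), of f] tm_eq[OF dsym, of "f a" "f b" id] ab by simp
    qed
    have injK: "inj_on ((`) f) K"
    proof
      fix x y assume "x \<in> K" "y \<in> K" "f ` x = f ` y"
      then show "x = y" using inj_on_image_eq_iff[OF inj] unfolding K_def complete_edges_def by auto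
    qed
    have imK: "(`) f ` K = {e. e \<subseteq> V \<and> card e = 2}"
    proof (intro equalityI subsetI)
      fix e' assume "e' \<in> (`) f ` K"
      then obtain e where e: "e \<subseteq> W" "card e = 2" "e' = f ` e" unfolding K_def complete_edges_def by auto
      have "card e' = 2" using e card_image[OF inj_on_subset[OF inj e(1)]] by simp
      then show "e' \<in> {e. e \<subseteq> V \<and> card e = 2}" using e im by auto
    next
      fix e' assume e': "e' \<in> {e. e \<subseteq> V \<and> card e = 2}"
      define e where "e = inv_into W f ` e'"
      have "e \<subseteq> W" unfolding e_def using e' im by (auto intro: inv_into_into)
      moreover have "f ` e = e'" unfolding e_def using image_inv_into_cancel[OF im] e' by auto
      moreover have "card e = 2" unfolding e_def using e' im
        by (subst card_image) (auto intro!: inj_on_inv_into)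
      ultimately show "e' \<in> (`) f ` K" unfolding K_def complete_edges_def by auto
    qed
    show ?thesis using sum.reindex[OF injK, of "tm E id"] imK sum.cong[OF refl eq] by simp
  qed
  have indep: "sum (tm E f) K = D" if "bij_betw f W V" for f
    unfolding D_def using indep0[OF that] indep0[OF bij0] by simp
  have specK: "ham_spectrum W K V E = {D}"
    unfolding ham_spectrum_tm using indep bij0 by auto
  have hp: "h_plus W (complete_edges W) V E = D"
    unfolding h_plus_def K_def[symmetric] specK by simp
  have propK: "\<forall>x\<in>K. 2 \<le> tm E f0 x \<longrightarrow> (\<exists>y\<in>K. tm E f0 y = tm E f0 x - 1)"
  proof (intro ballI impI)
    fix e assume e: "e \<in> K" and d2: "2 \<le> tm E f0 e"
    obtain a b where ab: "e = {a,b}" "a \<noteq> b" using e unfolding K_def complete_edges_def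
      by (auto simp: card_2_iff)
    have aW: "a \<in> W" "b \<in> W" using e ab unfolding K_def complete_edges_def by auto
    define u where "u = f0 a"
    define v where "v = f0 b"
    define d where "d = tm E f0 e"
    have uv: "u \<in> V" "v \<in> V" using aW bij0 unfolding u_def v_def bij_betw_def by auto
    have dd: "d = dist E u v" unfolding d_def u_def v_def ab using tm_eq[OF dsym ab(2)] by simp
    have "walk E u v d" unfolding dd dist_def using conn uv by (auto intro: LeastI_ex)
    then obtain p where p: "length p = Suc d" "p ! 0 = u" "p ! d = v" "\<forall>i<d. E (p ! i) (p ! Suc i)"
      unfolding walk_def by auto
    define c where "c = p ! (d - 1)"
    have d2': "2 \<le> d" using d2 unfolding d_def .
    have "d - 1 < d" using d2' by simp
    then have "E (p ! (d - 1)) (p ! Suc (d - 1))" using p(4) by blast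
    moreover have "Suc (d - 1) = d" using d2' by simp
    ultimately have Ecv: "E c v" using p(3) unfolding c_def by simp
    have cV: "c \<in> V" using Ecv Ein by auto
    have wuc: "walk E u c (d - 1)" unfolding c_def using walk_take[OF p(1,2,4)] by auto
    have duc: "dist E u c = d - 1"
    proof (rule antisym)
      show "dist E u c \<le> d - 1" unfolding dist_def using wuc by (rule Least_le)
      show "d - 1 \<le> dist E u c"
      proof (rule ccontr)
        assume "\<not> d - 1 \<le> dist E u c"
        moreover have "walk E u c (dist E u c)" unfolding dist_def using wuc by (rule LeastI)
        then have "walk E u v (Suc (dist E u c))" using Ecv by (rule walk_snoc)
        then have "d \<le> Suc (dist E u c)" unfolding dd dist_def by (rule Least_le)
        ultimately show False using d2 unfolding d_def[symmetric] by auto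
      qed
    qed
    have cu: "c \<noteq> u"
    proof
      assume "c = u"
      then have "dist E u c = 0" unfolding dist_def using walk_refl[of E u]
        by (metis Least_le le_zero_eq)
      then show False using duc d2 unfolding d_def[symmetric] by auto
    qed
    define a' where "a' = inv_into W f0 c"
    have a': "a' \<in> W" "f0 a' = c" unfolding a'_def using cV bij0
      by (auto simp: bij_betw_def intro: inv_into_into f_inv_into_f)
    have "a' \<noteq> a" using a' cu unfolding u_def by auto
    then have "{a, a'} \<in> K" using a' aW unfolding K_def complete_edges_def by auto
    moreover have "tm E f0 {a, a'} = d - 1"
      using tm_eq[OF dsym, of a a' f0] \<open>a' \<noteq> a\<close> a' duc unfolding u_def by auto
    ultimately show "\<exists>y\<in>K. tm E f0 y = tm E f0 e - 1" unfolding d_def by blast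
  qed
  show ?thesis
  proof (intro equalityI subsetI)
    fix s assume "s \<in> (\<Union>EH\<in>simple_graphs_on W. ham_spectrum W EH V E)"
    then obtain EH f where EH: "EH \<subseteq> K" and bf: "bij_betw f W V" and s: "s = sum (tm E f) EH"
      unfolding simple_graphs_on_def ham_spectrum_tm K_def complete_edges_def by auto
    have "s \<le> sum (tm E f) K" unfolding s using EH fK by (intro sum_mono2) auto
    then show "s \<in> {0 .. h_plus W (complete_edges W) V E}" using indep[OF bf] hp by simp
  next
    fix k assume "k \<in> {0 .. h_plus W (complete_edges W) V E}"
    then have "k \<le> sum (tm E f0) K" using hp D_def by simp
    then have "\<exists>A\<subseteq>K. sum (tm E f0) A = k" by (rule subset_sums[OF fK propK])
    then obtain A where A: "A \<subseteq> K" "sum (tm E f0) A = k" by blast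
    then have "A \<in> simple_graphs_on W" unfolding simple_graphs_on_def K_def complete_edges_def by auto
    moreover have "k \<in> ham_spectrum W A V E" unfolding ham_spectrum_tm using bij0 A by auto
    ultimately show "k \<in> (\<Union>EH\<in>simple_graphs_on W. ham_spectrum W EH V E)" by blast
  qed
qed

end
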